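(* Let $f:\mathbb H\to\mathbb C$ be polar-analytic on $\mathbb H$ and let $(r_1,\theta_1),(r_2,\theta_2)\in\mathbb H$. Then the line integral $$\int_\gamma f(r,\theta)\,e^{i\theta}\,(dr+ir\,d\theta)$$ has the same value for every regular curve $\gamma$ in $\mathbb H$ starting at $(r_1,\theta_1)$ and ending at $(r_2,\theta_2)$. In particular, this integral vanishes for every closed regular curve $\gamma$ in $\mathbb H$.
   Context: $\mathbb H:=\{(r,\theta): r>0,\ \theta\in\mathbb R\}$. A function $f:\mathbb H\to\mathbb C$ is called polar-analytic on $\mathbb H$ if for every $(r_0,\theta_0)\in\mathbb H$ the limit $$(D_{\rm pol}f)(r_0,\theta_0):=\lim_{(r,\theta)\to(r_0,\theta_0)}\frac{f(r,\theta)-f(r_0,\theta_0)}{re^{i\theta}-r_0e^{i\theta_0}}$$ exists (with $re^{i\theta}\neq r_0e^{i\theta_0}$), independently of how $(r,\theta)$ approaches $(r_0,\theta_0)$ within $\mathbb H$. A regular curve is a piecewise continuously differentiable curve $\gamma:[a,b]\to\mathbb H$, $t\mapsto(r(t),\theta(t))$, and the line integral means $\int_a^b f(r(t),\theta(t))e^{i\theta(t)}\big(r'(t)+ir(t)\theta'(t)\big)\,dt$. *)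

theory Defs
  imports "HOL-Analysis.Analysis"
begin

definition Hpl :: "(real \<times> real) set" where
  "Hpl = {p. fst p > 0}"

definition pol :: "real \<times> real \<Rightarrow> complex" where
  "pol p = complex_of_real (fst p) * cis (snd p)"

definition polar_analytic :: "(real \<times> real \<Rightarrow> complex) \<Rightarrow> bool" where
  "polar_analytic f \<longleftrightarrow>
     (\<forall>p0\<in>Hpl. \<exists>D. ((\<lambda>p. (f p - f p0) / (pol p - pol p0)) \<longlongrightarrow> D)
                     (at p0 within {p \<in> Hpl. pol p \<noteq> pol p0}))"

definition regular_curve :: "(real \<Rightarrow> real \<times> real) \<Rightarrow> real \<Rightarrow> real \<Rightarrow> bool" where
  "regular_curve \<gamma> a b \<longleftrightarrow>
     a \<le> b \<and> \<gamma> piecewise_C1_differentiable_on {a..b} \<and> \<gamma> ` {a..b} \<subseteq> Hpl"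

definition polar_integrand ::
  "(real \<times> real \<Rightarrow> complex) \<Rightarrow> (real \<Rightarrow> real \<times> real) \<Rightarrow> real \<Rightarrow> complex" where
  "polar_integrand f \<gamma> t =
     f (\<gamma> t) * cis (snd (\<gamma> t)) *
     (complex_of_real (fst (vector_derivative \<gamma> (at t)))
      + \<i> * complex_of_real (fst (\<gamma> t)) * complex_of_real (snd (vector_derivative \<gamma> (at t))))"

end

theory Submission imports Defs "HOL-Complex_Analysis.Complex_Analysis" begin

lemma exp_ne_near:
  fixes w w0 :: complex
  assumes "w \<noteq> w0" "dist w w0 < 1"
  shows "exp w \<noteq> exp w0"
proof
  assume "exp w = exp w0"
  then obtain n :: int where n: "w = w0 + (of_int (2 * n) * pi) * \<i>" by (auto simp: exp_eq)
  with assms have "n \<noteq> 0" by auto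
  hence "1 \<le> \<bar>real_of_int n\<bar>" by linarith
  have "dist w w0 = norm ((of_int (2 * n) * pi) * \<i>)" using n by (simp add: dist_norm)
  also have "\<dots> = 2 * \<bar>real_of_int n\<bar> * pi" by (simp add: norm_mult abs_mult)
  also have "\<dots> \<ge> 2 * 1 * pi" using \<open>1 \<le> _\<close> by (intro mult_right_mono mult_left_mono) auto
  finally show False using assms(2) pi_gt3 by linarith
qed

lemma pol_exp: "pol (exp (Re w), Im w) = exp w"
  by (simp add: pol_def exp_eq_polar)

lemma F_deriv:
  assumes pa: "polar_analytic f"
  shows "(\<lambda>w. f (exp (Re w), Im w)) field_differentiable at w0"
proof -
  define \<psi> where "\<psi> = (\<lambda>w::complex. (exp (Re w), Im w))"
  define p0 where "p0 = \<psi> w0"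
  define S where "S = {p \<in> Hpl. pol p \<noteq> pol p0}"
  have "p0 \<in> Hpl" by (simp add: p0_def \<psi>_def Hpl_def)
  with pa obtain D where D: "((\<lambda>p. (f p - f p0) / (pol p - pol p0)) \<longlongrightarrow> D) (at p0 within S)"
    unfolding polar_analytic_def S_def by blast
  have ev: "eventually (\<lambda>w. w \<noteq> w0 \<and> dist w w0 < 1) (at w0)"
    unfolding eventually_at by (rule exI[of _ 1]) auto
  have ev2: "eventually (\<lambda>w. exp w \<noteq> exp w0 \<and> w \<noteq> w0) (at w0)"
    using ev by eventually_elim (use exp_ne_near in auto)
  have pe: "pol (\<psi> w) = exp w" for w by (simp add: \<psi>_def pol_exp)
  have "(\<psi> \<longlongrightarrow> p0) (at w0)"
    unfolding \<psi>_def p0_def by (intro tendsto_intros continuous_imp_tendsto isCont_Re isCont_Im isCont_exp) 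
  moreover have "eventually (\<lambda>w. \<psi> w \<in> S \<and> \<psi> w \<noteq> p0) (at w0)"
    using ev2 by eventually_elim (auto simp: S_def Hpl_def \<psi>_def p0_def pol_exp complex_eq_iff)
  ultimately have lim1: "filterlim \<psi> (at p0 within S) (at w0)"
    by (simp add: filterlim_at)
  have lim2: "((\<lambda>w. (f (\<psi> w) - f p0) / (pol (\<psi> w) - pol p0)) \<longlongrightarrow> D) (at w0)"
    using filterlim_compose[OF D lim1] by simp
  have lim3: "((\<lambda>w. (exp w - exp w0) / (w - w0)) \<longlongrightarrow> exp w0) (at w0)"
    using DERIV_exp[of w0] by (simp add: has_field_derivative_iff)
  have lim4: "((\<lambda>w. (f (\<psi> w) - f p0) / (pol (\<psi> w) - pol p0) * ((exp w - exp w0) / (w - w0))) \<longlongrightarrow> D * exp w0) (at w0)"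
    by (intro tendsto_mult lim2 lim3)
  have "((\<lambda>w. (f (\<psi> w) - f (\<psi> w0)) / (w - w0)) \<longlongrightarrow> D * exp w0) (at w0)"
  proof (rule Lim_transform_eventually[OF lim4])
    show "eventually (\<lambda>w. (f (\<psi> w) - f p0) / (pol (\<psi> w) - pol p0) * ((exp w - exp w0) / (w - w0)) = (f (\<psi> w) - f (\<psi> w0)) / (w - w0)) (at w0)"
      using ev2 by eventually_elim (simp add: pe p0_def)
  qed
  hence "((\<lambda>w. f (\<psi> w)) has_field_derivative D * exp w0) (at w0)"
    by (simp add: has_field_derivative_iff)
  thus ?thesis unfolding \<psi>_def field_differentiable_def by blast
qed


lemma curve_integral:
  assumes pa: "polar_analytic f"
  obtains G where "\<And>\<gamma> a b. regular_curve \<gamma> a b \<Longrightarrow>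
     (polar_integrand f \<gamma> has_integral
        (G (of_real (ln (fst (\<gamma> b))) + \<i> * of_real (snd (\<gamma> b)))
       - G (of_real (ln (fst (\<gamma> a))) + \<i> * of_real (snd (\<gamma> a))))) {a..b}"
proof -
  define h where "h = (\<lambda>w. f (exp (Re w), Im w) * exp w)"
  have hol: "h holomorphic_on UNIV"
  proof -
    have "(\<lambda>w. f (exp (Re w), Im w)) holomorphic_on UNIV"
      unfolding holomorphic_on_def using F_deriv[OF pa] field_differentiable_at_within by blast
    then show ?thesis unfolding h_def by (intro holomorphic_on_mult holomorphic_on_exp) auto
  qed
  obtain G where G: "\<And>x. (G has_field_derivative h x) (at x)"
    using holomorphic_convex_primitive'[OF convex_UNIV open_UNIV hol] by auto
  have Gc: "continuous_on UNIV G"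
    using G by (meson DERIV_isCont continuous_at_imp_continuous_on)
  show ?thesis
  proof (rule that)
    fix \<gamma> a b assume rc: "regular_curve \<gamma> a b"
    define \<Phi> where "\<Phi> = (\<lambda>t. of_real (ln (fst (\<gamma> t))) + \<i> * of_real (snd (\<gamma> t)) :: complex)"
    have ab: "a \<le> b" and pw: "\<gamma> piecewise_C1_differentiable_on {a..b}" and sub: "\<gamma> ` {a..b} \<subseteq> Hpl"
      using rc by (auto simp: regular_curve_def)
    have pos: "t \<in> {a..b} \<Longrightarrow> fst (\<gamma> t) > 0" for t using sub by (auto simp: Hpl_def image_subset_iff)
    obtain s where fs: "finite s" and c1: "\<gamma> C1_differentiable_on {a..b} - s"
      using pw by (auto simp: piecewise_C1_differentiable_on_def)
    have cg: "continuous_on {a..b} \<gamma>" using pw by (simp add: piecewise_C1_differentiable_on_def)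
    have cPhi: "continuous_on {a..b} \<Phi>"
      unfolding \<Phi>_def using pos
      by (intro continuous_intros continuous_on_fst continuous_on_snd cg) force+
    have cont: "continuous_on {a..b} (\<lambda>t. G (\<Phi> t))"
      using continuous_on_compose[OF cPhi continuous_on_subset[OF Gc]] by (simp add: o_def)
    have der: "((\<lambda>t. G (\<Phi> t)) has_vector_derivative polar_integrand f \<gamma> t) (at t)"
      if t: "t \<in> {a<..<b} - s" for t
    proof -
      have "t \<in> {a..b} - s" using t by auto
      then have gd: "(\<gamma> has_vector_derivative vector_derivative \<gamma> (at t)) (at t)"
        using c1 by (auto simp: C1_differentiable_on_eq vector_derivative_works)
      define V where "V = vector_derivative \<gamma> (at t)"
      define r where "r = fst (\<gamma> t)"
      define th where "th = snd (\<gamma> t)"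
      have r0: "r > 0" using pos t by (auto simp: r_def)
      have d1: "((\<lambda>t. fst (\<gamma> t)) has_real_derivative fst V) (at t)"
        using bounded_linear.has_vector_derivative[OF bounded_linear_fst gd]
        by (simp add: V_def has_real_derivative_iff_has_vector_derivative)
      have d2: "((\<lambda>t. snd (\<gamma> t)) has_real_derivative snd V) (at t)"
        using bounded_linear.has_vector_derivative[OF bounded_linear_snd gd]
        by (simp add: V_def has_real_derivative_iff_has_vector_derivative)
      have d3: "((\<lambda>t. ln (fst (\<gamma> t))) has_real_derivative (fst V / r)) (at t)"
        using DERIV_chain2[OF DERIV_ln_divide[OF r0[unfolded r_def]] d1] unfolding r_def
        by (simp add: field_simps)
      have dP: "(\<Phi> has_vector_derivative (of_real (fst V / r) + \<i> * of_real (snd V))) (at t)"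
        unfolding \<Phi>_def
        by (intro derivative_intros has_vector_derivative_of_real d3 d2)
      have ch: "((G \<circ> \<Phi>) has_vector_derivative (of_real (fst V / r) + \<i> * of_real (snd V)) * h (\<Phi> t)) (at t)"
        by (rule field_vector_diff_chain_at[OF dP G])
      have e1: "exp (Re (\<Phi> t)) = r" using r0 by (simp add: \<Phi>_def r_def)
      have e2: "Im (\<Phi> t) = th" by (simp add: \<Phi>_def th_def)
      have hP: "h (\<Phi> t) = f (\<gamma> t) * (of_real r * cis th)"
        unfolding h_def using e1 e2 by (simp add: exp_eq_polar r_def th_def)
      have "(of_real (fst V / r) + \<i> * of_real (snd V)) * h (\<Phi> t) = polar_integrand f \<gamma> t"
        unfolding hP polar_integrand_def V_def[symmetric] r_def[symmetric] th_def[symmetric]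
        using r0 by (simp add: field_simps)
      then show ?thesis using ch by (simp add: o_def)
    qed
    have "(polar_integrand f \<gamma> has_integral (G (\<Phi> b) - G (\<Phi> a))) {a..b}"
      by (rule fundamental_theorem_of_calculus_interior_strong[OF fs ab der cont])
    then show "(polar_integrand f \<gamma> has_integral
        (G (of_real (ln (fst (\<gamma> b))) + \<i> * of_real (snd (\<gamma> b)))
       - G (of_real (ln (fst (\<gamma> a))) + \<i> * of_real (snd (\<gamma> a))))) {a..b}"
      by (simp add: \<Phi>_def)
  qed
qed

theorem proposition2:
  fixes f :: "real \<times> real \<Rightarrow> complex" and p1 p2 :: "real \<times> real"
  assumes "polar_analytic f" and "p1 \<in> Hpl" and "p2 \<in> Hpl"
  shows "(\<exists>I. \<forall>\<gamma> a b. regular_curve \<gamma> a b \<and> \<gamma> a = p1 \<and> \<gamma> b = p2 \<longrightarrow>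
              (polar_integrand f \<gamma> has_integral I) {a..b})
       \<and> (\<forall>\<gamma> a b. regular_curve \<gamma> a b \<and> \<gamma> a = \<gamma> b \<longrightarrow>
              (polar_integrand f \<gamma> has_integral 0) {a..b})"
proof -
  obtain G where G: "\<And>\<gamma> a b. regular_curve \<gamma> a b \<Longrightarrow>
     (polar_integrand f \<gamma> has_integral
        (G (of_real (ln (fst (\<gamma> b))) + \<i> * of_real (snd (\<gamma> b)))
       - G (of_real (ln (fst (\<gamma> a))) + \<i> * of_real (snd (\<gamma> a))))) {a..b}"
    using curve_integral[OF assms(1)] by blast
  show ?thesis
  proof
    show "\<exists>I. \<forall>\<gamma> a b. regular_curve \<gamma> a b \<and> \<gamma> a = p1 \<and> \<gamma> b = p2 \<longrightarrow>
              (polar_integrand f \<gamma> has_integral I) {a..b}"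
      apply (rule exI[of _ "G (of_real (ln (fst p2)) + \<i> * of_real (snd p2)) - G (of_real (ln (fst p1)) + \<i> * of_real (snd p1))"])
      using G by auto
    show "\<forall>\<gamma> a b. regular_curve \<gamma> a b \<and> \<gamma> a = \<gamma> b \<longrightarrow>
              (polar_integrand f \<gamma> has_integral 0) {a..b}"
      using G by force
  qed
qed

end
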